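(* Let $\mathcal L\subseteq\mathcal A^*$ be a language. (1) For all $n_2\ge n_1$, $\mathfrak s\in\{\ell,r\}$ and $w'\in\mathcal L^{\mathfrak s}_{n_2}$, the word $w=w'_{[1,n_1]}$ (if $\mathfrak s=\ell$), resp. $w=w'_{[n_2-n_1+1,n_2]}$ (if $\mathfrak s=r$), is $\mathfrak s$-special. Assume now in addition that $\mathcal L$ satisfies RBC with constant $n_0$ (every bispecial word of length $\ge n_0$ is regular bispecial). (2) For all $n_2\ge n_1\ge n_0$, $\mathfrak s\in\{\ell,r\}$ and $w\in\mathcal L^{\mathfrak s}_{n_1}$, there is a unique $w'\in\mathcal L^{\mathfrak s}_{n_2}$ with $w=w'_{[1,n_1]}$ if $\mathfrak s=\ell$, resp. $w=w'_{[n_2-n_1+1,n_2]}$ if $\mathfrak s=r$. (3) There is $N$ such that for all $n_2\ge n_1\ge N$ and $\mathfrak s\in\{\ell,r\}$, any $w'\in\mathcal L^{\mathfrak s}_{n_1}$ and $w''\in\mathcal L^{\mathfrak s}_{n_2}$ with $w'_{[1,n_0]}=w''_{[1,n_0]}$ (if $\mathfrak s=\ell$), resp. $w'_{[n_1-n_0+1,n_1]}=w''_{[n_2-n_0+1,n_2]}$ (if $\mathfrak s=r$), satisfy $Ex^{\mathfrak s}(w')=Ex^{\mathfrak s}(w'')$.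
   Context: $\mathcal{A}$ is a finite alphabet, $\mathcal{A}^*$ the set of nonempty finite words, $w_{[i,j]}=w_i\cdots w_j$. A language is a set $\mathcal L\subseteq\mathcal A^*$ with $\mathcal A\subseteq\mathcal L$, closed under taking subwords, and such that for every $w\in\mathcal L$ there are $a,b\in\mathcal A$ with $awb\in\mathcal L$. $\mathcal L_n$ = words of length $n$ in $\mathcal L$. $Ex^\ell(w)=\{a: aw\in\mathcal L\}$, $Ex^r(w)=\{b: wb\in\mathcal L\}$; $w$ is $\ell$-special (left special) if $|Ex^\ell(w)|\ge2$, $r$-special (right special) if $|Ex^r(w)|\ge2$, bispecial if both; $\mathcal L_n^{\mathfrak s}$ is the set of $\mathfrak s$-special words of length $n$. A bispecial $w$ is regular bispecial if there is exactly one $\hat a\in Ex^\ell(w)$ with $\hat aw$ right special and exactly one $\hat b\in Ex^r(w)$ with $w\hat b$ left special. $\mathcal L$ satisfies RBC (regular bispecial condition) if for some $n_0$ every bispecial word of length $\ge n_0$ is regular bispecial. *)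

theory Defs
  imports Main
begin

text \<open>Words over a finite alphabet (the type 'a) are lists; the empty list is not a word
  of the language. w_[i,j] is modelled via take/drop.\<close>

definition is_subword :: "'a list \<Rightarrow> 'a list \<Rightarrow> bool" where
  "is_subword u w \<longleftrightarrow> u \<noteq> [] \<and> (\<exists>p s. w = p @ u @ s)"

definition is_language :: "('a::finite) list set \<Rightarrow> bool" where
  "is_language L \<longleftrightarrow>
     (\<forall>w\<in>L. w \<noteq> []) \<and>
     (\<forall>a. [a] \<in> L) \<and>
     (\<forall>w\<in>L. \<forall>u. is_subword u w \<longrightarrow> u \<in> L) \<and>
     (\<forall>w\<in>L. \<exists>a b. [a] @ w @ [b] \<in> L)"

datatype side = Lside | Rside

definition Ex_l :: "'a list set \<Rightarrow> 'a list \<Rightarrow> 'a set" where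
  "Ex_l L w = {a. a # w \<in> L}"

definition Ex_r :: "'a list set \<Rightarrow> 'a list \<Rightarrow> 'a set" where
  "Ex_r L w = {b. w @ [b] \<in> L}"

fun Ext :: "'a list set \<Rightarrow> side \<Rightarrow> 'a list \<Rightarrow> 'a set" where
  "Ext L Lside w = Ex_l L w"
| "Ext L Rside w = Ex_r L w"

definition special :: "'a list set \<Rightarrow> side \<Rightarrow> 'a list \<Rightarrow> bool" where
  "special L s w \<longleftrightarrow> w \<in> L \<and> card (Ext L s w) \<ge> 2"

definition bispecial :: "'a list set \<Rightarrow> 'a list \<Rightarrow> bool" where
  "bispecial L w \<longleftrightarrow> special L Lside w \<and> special L Rside w"

definition regular_bispecial :: "'a list set \<Rightarrow> 'a list \<Rightarrow> bool" where
  "regular_bispecial L w \<longleftrightarrow> bispecial L w \<and>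
     (\<exists>!a. a \<in> Ex_l L w \<and> special L Rside (a # w)) \<and>
     (\<exists>!b. b \<in> Ex_r L w \<and> special L Lside (w @ [b]))"

definition RBC_with :: "'a list set \<Rightarrow> nat \<Rightarrow> bool" where
  "RBC_with L n0 \<longleftrightarrow> (\<forall>w. bispecial L w \<and> length w \<ge> n0 \<longrightarrow> regular_bispecial L w)"

text \<open>cut Lside n w = w_[1,n]; cut Rside n w = w_[|w|-n+1,|w|].\<close>
fun cut :: "side \<Rightarrow> nat \<Rightarrow> 'a list \<Rightarrow> 'a list" where
  "cut Lside n w = take n w"
| "cut Rside n w = drop (length w - n) w"

end

theory Submission imports Defs begin

lemma sub_in:
  assumes "is_language L" "w \<in> L" "u \<noteq> []" "w = p @ u @ s" shows "u \<in> L"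
  using assms unfolding is_language_def is_subword_def by blast

lemma take_in:
  assumes "is_language L" "w \<in> L" "0 < k" shows "take k w \<in> L"
proof -
  have "w \<noteq> []" using assms unfolding is_language_def by blast
  hence "take k w \<noteq> []" using assms(3) by simp
  thus ?thesis using sub_in[OF assms(1,2), of "take k w" "[]" "drop k w"] by simp
qed

lemma Exl_take_mono:
  assumes "is_language L" "w \<in> L" "0 < k" shows "Ex_l L w \<subseteq> Ex_l L (take k w)"
proof
  fix a assume "a \<in> Ex_l L w"
  hence "a # w \<in> L" by (simp add: Ex_l_def)
  from take_in[OF assms(1) this, of "Suc k"] show "a \<in> Ex_l L (take k w)"
    by (simp add: Ex_l_def)
qed

lemma card_fin_mono: "(A::('a::finite) set) \<subseteq> B \<Longrightarrow> card A \<le> card B"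
  by (simp add: card_mono)

lemma spec_take:
  assumes "is_language L" "special L Lside w" "0 < k" shows "special L Lside (take k w)"
  using assms Exl_take_mono[OF assms(1) _ assms(3), of w] card_fin_mono[of "Ex_l L w" "Ex_l L (take k w)"]
    take_in[OF assms(1) _ assms(3), of w]
  unfolding special_def by auto

lemma right_ext:
  assumes "is_language L" "w \<in> L" shows "\<exists>b. w @ [b] \<in> L"
proof -
  obtain a b where "[a] @ w @ [b] \<in> L" using assms unfolding is_language_def by blast
  hence "w @ [b] \<in> L" using sub_in[OF assms(1), of "[a] @ w @ [b]" "w @ [b]" "[a]" "[]"] by simp
  thus ?thesis by blast
qed

lemma one_step:
  assumes lang: "is_language L" and rbc: "RBC_with L n0" and len: "n0 \<le> length w"
    and sp: "special L Lside w"
  shows "\<exists>!b. special L Lside (w @ [b])"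
proof -
  have wL: "w \<in> L" using sp by (simp add: special_def)
  have uniq: "b = c" if "special L Lside (w @ [b])" "special L Lside (w @ [c])" for b c
  proof (rule ccontr)
    assume "b \<noteq> c"
    have "{b, c} \<subseteq> Ex_r L w" using that by (simp add: special_def Ex_r_def)
    hence "card {b,c} \<le> card (Ex_r L w)" by (rule card_fin_mono)
    hence "special L Rside w" using \<open>b \<noteq> c\<close> wL by (simp add: special_def)
    hence "regular_bispecial L w" using rbc sp len by (simp add: RBC_with_def bispecial_def)
    hence "\<exists>!b. b \<in> Ex_r L w \<and> special L Lside (w @ [b])" by (simp add: regular_bispecial_def)
    moreover have "b \<in> Ex_r L w" "c \<in> Ex_r L w" using \<open>{b, c} \<subseteq> Ex_r L w\<close> by auto
    ultimately show False using that \<open>b \<noteq> c\<close> by blast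
  qed
  have ex: "\<exists>b. special L Lside (w @ [b])"
  proof (cases "special L Rside w")
    case True
    hence "regular_bispecial L w" using rbc sp len by (simp add: RBC_with_def bispecial_def)
    thus ?thesis by (auto simp: regular_bispecial_def)
  next
    case False
    obtain b where b: "w @ [b] \<in> L" using right_ext[OF lang wL] by blast
    have single: "d = b" if "w @ [d] \<in> L" for d
    proof (rule ccontr)
      assume "d \<noteq> b"
      have "{b, d} \<subseteq> Ex_r L w" using that b by (simp add: Ex_r_def)
      hence "card {b,d} \<le> card (Ex_r L w)" by (rule card_fin_mono)
      thus False using False \<open>d \<noteq> b\<close> wL by (simp add: special_def)
    qed
    have "Ex_l L w \<subseteq> Ex_l L (w @ [b])"
    proof
      fix a assume "a \<in> Ex_l L w"
      hence "a # w \<in> L" by (simp add: Ex_l_def)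
      then obtain d where d: "(a # w) @ [d] \<in> L" using right_ext[OF lang] by blast
      hence "w @ [d] \<in> L" using sub_in[OF lang d, of "w @ [d]" "[a]" "[]"] by simp
      hence "d = b" by (rule single)
      thus "a \<in> Ex_l L (w @ [b])" using d by (simp add: Ex_l_def)
    qed
    hence "card (Ex_l L w) \<le> card (Ex_l L (w @ [b]))" by (rule card_fin_mono)
    hence "special L Lside (w @ [b])" using sp b by (simp add: special_def)
    thus ?thesis by blast
  qed
  show ?thesis using ex uniq by blast
qed

lemma extend:
  assumes lang: "is_language L" and rbc: "RBC_with L n0" and len: "n0 \<le> length w"
    and sp: "special L Lside w"
  shows "\<exists>w'. special L Lside w' \<and> length w' = length w + m \<and> take (length w) w' = w"
proof (induction m)
  case 0 thus ?case using sp by (intro exI[of _ w]) simp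
next
  case (Suc m)
  then obtain v where v: "special L Lside v" "length v = length w + m" "take (length w) v = w" by blast
  have "n0 \<le> length v" using v(2) len by simp
  then obtain b where "special L Lside (v @ [b])" using one_step[OF lang rbc _ v(1)] by blast
  thus ?case using v by (intro exI[of _ "v @ [b]"]) simp
qed

lemma uniq_ext:
  assumes lang: "is_language L" and rbc: "RBC_with L n0" and n0: "1 \<le> n0" and n1: "n0 \<le> n1"
  shows "special L Lside w' \<Longrightarrow> special L Lside w'' \<Longrightarrow> length w' = n1 + d \<Longrightarrow> length w'' = n1 + d
    \<Longrightarrow> take n1 w' = take n1 w'' \<Longrightarrow> w' = w''"
proof (induction d arbitrary: w' w'')
  case 0 thus ?case by simp
next
  case (Suc d)
  let ?k = "n1 + d"
  have pos: "0 < ?k" using n0 n1 by simp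
  have s1: "special L Lside (take ?k w')" "special L Lside (take ?k w'')"
    using spec_take[OF lang _ pos] Suc.prems by auto
  have "take ?k w' = take ?k w''"
    using Suc.IH[OF s1] Suc.prems by (simp add: min_def)
  moreover have "w' = take ?k w' @ [w' ! ?k]" "w'' = take ?k w'' @ [w'' ! ?k]"
    using Suc.prems by (simp_all add: take_Suc_conv_app_nth[symmetric])
  ultimately have v: "w' = take ?k w' @ [w' ! ?k]" "w'' = take ?k w' @ [w'' ! ?k]" by simp_all
  define v where "v = take ?k w'"
  define x where "x = w' ! ?k"
  define y where "y = w'' ! ?k"
  have v: "w' = v @ [x]" "w'' = v @ [y]" "v = take ?k w'" using v unfolding v_def x_def y_def by simp_all
  have "special L Lside v" using s1(1) v(3) by simp
  moreover have "n0 \<le> length v" using v(3) Suc.prems(3) n1 by simp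
  ultimately have "\<exists>!b. special L Lside (v @ [b])" using one_step[OF lang rbc] by blast
  moreover have "special L Lside (v @ [x])" "special L Lside (v @ [y])" using Suc.prems(1,2) v(1,2) by simp_all
  ultimately have "x = y" by blast
  thus ?case using v(1,2) by simp
qed

lemma stab_u:
  assumes lang: "is_language L" and rbc: "RBC_with L n0" and n0: "1 \<le> n0"
  shows "\<exists>M. \<forall>w' w''. M \<le> length w' \<and> length w' \<le> length w'' \<and> special L Lside w'
     \<and> special L Lside w'' \<and> take n0 w' = u \<and> take n0 w'' = u \<longrightarrow> Ex_l L w' = Ex_l L w''"
proof (cases "\<exists>w. special L Lside w \<and> n0 \<le> length w \<and> take n0 w = u")
  case False
  show ?thesis using False by (intro exI[of _ n0]) auto
next
  case True
  define P where "P k = (\<exists>w. special L Lside w \<and> n0 \<le> length w \<and> take n0 w = u \<and> card (Ex_l L w) = k)" for k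
  have "\<exists>k. P k" using True unfolding P_def by blast
  hence "P (LEAST k. P k)" by (rule LeastI_ex)
  then obtain w0 where w0: "special L Lside w0" "n0 \<le> length w0" "take n0 w0 = u"
     "card (Ex_l L w0) = (LEAST k. P k)" unfolding P_def by blast
  have pref: "take m w = v" if "special L Lside w" "special L Lside v" "n0 \<le> length v" "length v = m"
     "m \<le> length w" "take n0 w = take n0 v" for w v m
  proof -
    have m0: "0 < m" using that n0 by simp
    have "special L Lside (take m w)" using spec_take[OF lang that(1) m0] .
    moreover have "length (take m w) = n0 + (m - n0)" "length v = n0 + (m - n0)"
      using that by auto
    moreover have "take n0 (take m w) = take n0 v" using that by (simp add: min_def)
    ultimately show ?thesis using uniq_ext[OF lang rbc n0 order_refl] that(2) by blast
  qed
  show ?thesis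
  proof (intro exI[of _ "length w0"] allI impI)
    fix w' w'' assume a: "length w0 \<le> length w' \<and> length w' \<le> length w'' \<and> special L Lside w'
     \<and> special L Lside w'' \<and> take n0 w' = u \<and> take n0 w'' = u"
    have t1: "take (length w0) w' = w0" using pref[of w' w0 "length w0"] a w0 by auto
    have t2: "take (length w') w'' = w'" using pref[of w'' w' "length w'"] a w0 by auto
    have w0pos: "0 < length w0" using w0(2) n0 by linarith
    have w'pos: "0 < length w'" using w0pos a by linarith
    have s1: "Ex_l L w'' \<subseteq> Ex_l L w'"
      using Exl_take_mono[OF lang _ w'pos, of w''] t2 a by (auto simp: special_def)
    have s2: "Ex_l L w' \<subseteq> Ex_l L w0"
      using Exl_take_mono[OF lang _ w0pos, of w'] t1 a by (auto simp: special_def)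
    have "P (card (Ex_l L w''))" unfolding P_def using a w0 by (intro exI[of _ w'']) auto
    hence "card (Ex_l L w0) \<le> card (Ex_l L w'')" using w0(4) by (simp add: Least_le)
    moreover have "card (Ex_l L w'') \<le> card (Ex_l L w')" "card (Ex_l L w') \<le> card (Ex_l L w0)"
      using s1 s2 card_fin_mono by blast+
    ultimately have "card (Ex_l L w'') = card (Ex_l L w')" by simp
    thus "Ex_l L w' = Ex_l L w''" using s1 card_subset_eq[OF finite s1] by simp
  qed
qed

lemma stab:
  assumes lang: "is_language L" and rbc: "RBC_with L n0" and n0: "1 \<le> n0"
  shows "\<exists>N. \<forall>w' w''. N \<le> length w' \<and> length w' \<le> length w'' \<and> special L Lside w'
     \<and> special L Lside w'' \<and> take n0 w' = take n0 w'' \<longrightarrow> Ex_l L w' = Ex_l L w''"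
proof -
  define U where "U = {xs::'a list. set xs \<subseteq> UNIV \<and> length xs = n0}"
  have fin: "finite U" unfolding U_def by (rule finite_lists_length_eq) simp
  have "\<forall>u\<in>U. \<exists>M. \<forall>w' w''. M \<le> length w' \<and> length w' \<le> length w'' \<and> special L Lside w'
     \<and> special L Lside w'' \<and> take n0 w' = u \<and> take n0 w'' = u \<longrightarrow> Ex_l L w' = Ex_l L w''"
    using stab_u[OF assms] by blast
  then obtain f where f: "\<And>u. u \<in> U \<Longrightarrow> \<forall>w' w''. f u \<le> length w' \<and> length w' \<le> length w'' \<and> special L Lside w'
     \<and> special L Lside w'' \<and> take n0 w' = u \<and> take n0 w'' = u \<longrightarrow> Ex_l L w' = Ex_l L w''"
    by metis
  define N where "N = Max (insert n0 (f ` U))"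
  show ?thesis
  proof (intro exI[of _ N] allI impI)
    fix w' w'' assume a: "N \<le> length w' \<and> length w' \<le> length w'' \<and> special L Lside w'
     \<and> special L Lside w'' \<and> take n0 w' = take n0 w''"
    have "n0 \<le> N" unfolding N_def using fin by simp
    hence u: "take n0 w' \<in> U" unfolding U_def using a by simp
    hence "f (take n0 w') \<le> N" unfolding N_def using fin by simp
    thus "Ex_l L w' = Ex_l L w''" using f[OF u] a by auto
  qed
qed

lemma rev_mem: "x \<in> rev ` L \<longleftrightarrow> rev x \<in> L"
  by (metis image_iff rev_rev_ident)

lemma lang_rev: assumes "is_language L" shows "is_language (rev ` L)"
proof -
  have A: "\<forall>w\<in>L. w \<noteq> []" "\<forall>a. [a] \<in> L" "\<forall>w\<in>L. \<forall>u. is_subword u w \<longrightarrow> u \<in> L"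
     "\<forall>w\<in>L. \<exists>a b. [a] @ w @ [b] \<in> L" using assms unfolding is_language_def by auto
  have 1: "\<forall>w\<in>rev ` L. w \<noteq> []" using A(1) by auto
  have 2: "\<forall>a. [a] \<in> rev ` L" using A(2) rev_mem by fastforce
  have 3: "\<forall>w\<in>rev ` L. \<forall>u. is_subword u w \<longrightarrow> u \<in> rev ` L"
  proof (intro ballI allI impI)
    fix w u assume "w \<in> rev ` L" "is_subword u w"
    then obtain p s where "rev w \<in> L" "u \<noteq> []" "w = p @ u @ s"
      using rev_mem unfolding is_subword_def by blast
    hence "is_subword (rev u) (rev w)" unfolding is_subword_def by (intro conjI exI[of _ "rev s"] exI[of _ "rev p"]) auto
    hence "rev u \<in> L" using A(3) \<open>rev w \<in> L\<close> by blast
    thus "u \<in> rev ` L" using rev_mem by blast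
  qed
  have 4: "\<forall>w\<in>rev ` L. \<exists>a b. [a] @ w @ [b] \<in> rev ` L"
  proof
    fix w assume "w \<in> rev ` L"
    then obtain a b where "[a] @ rev w @ [b] \<in> L" using A(4) rev_mem by blast
    hence "[b] @ w @ [a] \<in> rev ` L" using rev_mem[of "[b] @ w @ [a]" L] by simp
    thus "\<exists>a b. [a] @ w @ [b] \<in> rev ` L" by blast
  qed
  show ?thesis using 1 2 3 4 unfolding is_language_def by blast
qed

lemma Exl_rev: "Ex_l (rev ` L) v = Ex_r L (rev v)"
  unfolding Ex_l_def Ex_r_def using rev_mem[of _ L] by simp

lemma Exr_rev: "Ex_r (rev ` L) v = Ex_l L (rev v)"
  unfolding Ex_l_def Ex_r_def using rev_mem[of _ L] by simp

lemma specL_rev: "special (rev ` L) Lside v = special L Rside (rev v)"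
  unfolding special_def using Exl_rev[of L v] rev_mem[of v L] by simp

lemma specR_rev: "special (rev ` L) Rside v = special L Lside (rev v)"
  unfolding special_def using Exr_rev[of L v] rev_mem[of v L] by simp

lemma rbc_rev: assumes "RBC_with L n0" shows "RBC_with (rev ` L) n0"
  unfolding RBC_with_def
proof (intro allI impI)
  fix w assume a: "bispecial (rev ` L) w \<and> n0 \<le> length w"
  hence "bispecial L (rev w)" by (auto simp: bispecial_def specL_rev specR_rev)
  hence "regular_bispecial L (rev w)" using assms a by (simp add: RBC_with_def)
  thus "regular_bispecial (rev ` L) w"
    using a unfolding regular_bispecial_def by (simp add: Exl_rev Exr_rev specL_rev specR_rev)
qed

lemma cutR: "cut Rside n w = rev (take n (rev w))"
  by (simp add: rev_take)

lemma part2L: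
  assumes lang: "is_language L" and rbc: "RBC_with L n0" and n0: "1 \<le> n0"
    and n: "n0 \<le> n1" "n1 \<le> n2" and sp: "special L Lside w" and len: "length w = n1"
  shows "\<exists>!w'. special L Lside w' \<and> length w' = n2 \<and> take n1 w' = w"
proof -
  obtain w' where w': "special L Lside w'" "length w' = length w + (n2 - n1)" "take (length w) w' = w"
    using extend[OF lang rbc _ sp, of "n2 - n1"] n len by blast
  have u: "v1 = v2" if "special L Lside v1 \<and> length v1 = n2 \<and> take n1 v1 = w"
     "special L Lside v2 \<and> length v2 = n2 \<and> take n1 v2 = w" for v1 v2
    using uniq_ext[OF lang rbc n0 n(1), of v1 v2 "n2 - n1"] that n by auto
  show ?thesis using w' len n u by (intro ex1I[of _ w']) auto
qed

theorem mainTheorem2: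
  fixes L :: "('a::finite) list set"
  assumes "is_language L"
  shows "(\<forall>n1 n2 s w'. 1 \<le> n1 \<and> n1 \<le> n2 \<and> special L s w' \<and> length w' = n2
            \<longrightarrow> special L s (cut s n1 w'))
       \<and> (\<forall>n0. 1 \<le> n0 \<and> RBC_with L n0 \<longrightarrow>
            (\<forall>n1 n2 s w. n0 \<le> n1 \<and> n1 \<le> n2 \<and> special L s w \<and> length w = n1
               \<longrightarrow> (\<exists>!w'. special L s w' \<and> length w' = n2 \<and> cut s n1 w' = w))
          \<and> (\<exists>N. \<forall>n1 n2 s w' w''. N \<le> n1 \<and> n1 \<le> n2
               \<and> special L s w' \<and> length w' = n1
               \<and> special L s w'' \<and> length w'' = n2
               \<and> cut s n0 w' = cut s n0 w''
               \<longrightarrow> Ext L s w' = Ext L s w''))"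
proof (intro conjI allI impI)
  note lang = assms
  note langR = lang_rev[OF assms]
  fix n1 n2 s w' assume a: "1 \<le> n1 \<and> n1 \<le> n2 \<and> special L s w' \<and> length w' = n2"
  hence pos: "0 < n1" by simp
  show "special L s (cut s n1 w')"
  proof (cases s)
    case Lside thus ?thesis using spec_take[OF lang _ pos] a by simp
  next
    case Rside
    hence "special (rev ` L) Lside (rev w')" using a by (simp add: specL_rev)
    hence "special (rev ` L) Lside (take n1 (rev w'))" using spec_take[OF langR _ pos] by blast
    thus ?thesis using Rside by (simp add: specL_rev rev_take)
  qed
next
  note lang = assms
  note langR = lang_rev[OF assms]
  fix n0 n1 n2 s w assume r: "1 \<le> n0 \<and> RBC_with L n0"
    and a: "n0 \<le> n1 \<and> n1 \<le> n2 \<and> special L s w \<and> length w = n1"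
  have rbc: "RBC_with L n0" and n0: "1 \<le> n0" using r by auto
  show "\<exists>!w'. special L s w' \<and> length w' = n2 \<and> cut s n1 w' = w"
  proof (cases s)
    case Lside thus ?thesis using part2L[OF lang rbc n0, of n1 n2 w] a by simp
  next
    case Rside
    have "special (rev ` L) Lside (rev w)" using a Rside by (simp add: specL_rev)
    hence E: "\<exists>!v. special (rev ` L) Lside v \<and> length v = n2 \<and> take n1 v = rev w"
      using part2L[OF langR rbc_rev[OF rbc] n0, of n1 n2 "rev w"] a by simp
    have eq: "(special L Rside w' \<and> length w' = n2 \<and> cut Rside n1 w' = w) \<longleftrightarrow>
       (special (rev ` L) Lside (rev w') \<and> length (rev w') = n2 \<and> take n1 (rev w') = rev w)" for w'
      using cutR[of n1 w'] by (auto simp: specL_rev simp del: cut.simps)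
    from E obtain v where v: "special (rev ` L) Lside v \<and> length v = n2 \<and> take n1 v = rev w"
      and vu: "\<And>v'. special (rev ` L) Lside v' \<and> length v' = n2 \<and> take n1 v' = rev w \<Longrightarrow> v' = v"
      by blast
    show ?thesis unfolding Rside
    proof (rule ex1I[of _ "rev v"])
      show "special L Rside (rev v) \<and> length (rev v) = n2 \<and> cut Rside n1 (rev v) = w"
        using eq[of "rev v"] v by simp
    next
      fix w' assume "special L Rside w' \<and> length w' = n2 \<and> cut Rside n1 w' = w"
      hence "rev w' = v" using eq[of w'] vu by blast
      thus "w' = rev v" by auto
    qed
  qed
next
  note lang = assms
  note langR = lang_rev[OF assms]
  fix n0 assume r: "1 \<le> n0 \<and> RBC_with L n0"
  have rbc: "RBC_with L n0" and n0: "1 \<le> n0" using r by auto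
  obtain N1 where N1: "\<forall>w' w''. N1 \<le> length w' \<and> length w' \<le> length w'' \<and> special L Lside w'
     \<and> special L Lside w'' \<and> take n0 w' = take n0 w'' \<longrightarrow> Ex_l L w' = Ex_l L w''"
    using stab[OF lang rbc n0] by blast
  obtain N2 where N2: "\<forall>w' w''. N2 \<le> length w' \<and> length w' \<le> length w'' \<and> special (rev ` L) Lside w'
     \<and> special (rev ` L) Lside w'' \<and> take n0 w' = take n0 w'' \<longrightarrow> Ex_l (rev ` L) w' = Ex_l (rev ` L) w''"
    using stab[OF langR rbc_rev[OF rbc] n0] by blast
  show "\<exists>N. \<forall>n1 n2 s w' w''. N \<le> n1 \<and> n1 \<le> n2
               \<and> special L s w' \<and> length w' = n1
               \<and> special L s w'' \<and> length w'' = n2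
               \<and> cut s n0 w' = cut s n0 w''
               \<longrightarrow> Ext L s w' = Ext L s w''"
  proof (intro exI[of _ "max N1 N2"] allI impI)
    fix n1 n2 s w' w'' assume a: "max N1 N2 \<le> n1 \<and> n1 \<le> n2
               \<and> special L s w' \<and> length w' = n1
               \<and> special L s w'' \<and> length w'' = n2
               \<and> cut s n0 w' = cut s n0 w''"
    show "Ext L s w' = Ext L s w''"
    proof (cases s)
      case Lside thus ?thesis using N1 a by simp
    next
      case Rside
      have "take n0 (rev w') = take n0 (rev w'')"
        using a Rside cutR[of n0 w'] cutR[of n0 w''] by (simp del: cut.simps)
      hence "Ex_l (rev ` L) (rev w') = Ex_l (rev ` L) (rev w'')"
        using N2 a Rside by (simp add: specL_rev)
      thus ?thesis using Rside by (simp add: Exl_rev)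
    qed
  qed
qed

end
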